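(* Let $(n_m,k_m)_{m\ge1}$ be a sequence of pairs of integers with $k_m\ge 2$ and $n_m\ge k_m$, and let $P_m$ be the probability that a uniformly random composition of $n_m$ into $k_m$ positive parts has two equal parts (i.e. $x_i=x_j$ for some $i<j$). If $n_m/k_m^3\to\infty$ then $P_m\to 0$; if $n_m/k_m^3\to 0$ then $P_m\to 1$. Equivalently, writing $\mathcal D(n,k)$ for the number of compositions of $n$ into $k$ pairwise distinct positive parts and $\mathcal C(n,k)=\binom{n-1}{k-1}$, we have $\mathcal D(n,k)/\mathcal C(n,k)\to 1$ as $n/k^3\to\infty$ and $\mathcal D(n,k)/\mathcal C(n,k)\to 0$ as $n/k^3\to 0$.
   Context: A composition of a positive integer $n$ into $k$ positive parts is a sequence $(x_1,\dots,x_k)$ of positive integers with $x_1+\dots+x_k=n$; there are $\binom{n-1}{k-1}$ of them, and "uniformly random" means each is chosen with equal probability. *)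

theory Defs
  imports "HOL-Analysis.Analysis"
begin

definition compositions :: "nat \<Rightarrow> nat \<Rightarrow> nat list set" where
  "compositions n k = {xs. length xs = k \<and> (\<forall>x\<in>set xs. 0 < x) \<and> sum_list xs = n}"

definition prob_equal_parts :: "nat \<Rightarrow> nat \<Rightarrow> real" where
  "prob_equal_parts n k =
     real (card {xs \<in> compositions n k. \<exists>i j. i < j \<and> j < k \<and> xs ! i = xs ! j})
     / real (card (compositions n k))"

end

theory Submission
  imports Defs
begin



lemma finite_comp: "finite (compositions n k)"
proof -
  have "compositions n k \<subseteq> {xs. set xs \<subseteq> {0..n} \<and> length xs = k}"
    unfolding compositions_def
    using member_le_sum_list by fastforce
  thus ?thesis using finite_lists_length_eq[of "{0..n}" k] finite_subset by auto
qed

lemma card_comp: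
  assumes "1 \<le> k" "k \<le> n"
  shows "card (compositions n k) = (n - 1) choose (k - 1)"
proof -
  have im: "map Suc ` {l::nat list. size l = k \<and> sum_list l = n - k} = compositions n k"
  proof (rule set_eqI, rule iffI)
    fix xs assume "xs \<in> map Suc ` {l::nat list. size l = k \<and> sum_list l = n - k}"
    then obtain l where l: "size l = k" "sum_list l = n - k" "xs = map Suc l" by auto
    have "sum_list (map Suc l) = sum_list l + length l"
      by (induction l) auto
    thus "xs \<in> compositions n k" using l assms unfolding compositions_def by auto
  next
    fix xs assume xs: "xs \<in> compositions n k"
    define l where "l = map (\<lambda>x. x - 1) xs"
    have pos: "\<forall>x\<in>set xs. 0 < x" using xs unfolding compositions_def by auto
    have "xs = map Suc l" unfolding l_def using pos by (induction xs) auto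
    moreover have "sum_list (map Suc l) = sum_list l + length l"
      by (induction l) auto
    ultimately have "l \<in> {l::nat list. size l = k \<and> sum_list l = n - k}"
      using xs unfolding compositions_def l_def by auto
    thus "xs \<in> map Suc ` {l::nat list. size l = k \<and> sum_list l = n - k}"
      using \<open>xs = map Suc l\<close> by blast
  qed
  have "card (compositions n k) = card {l::nat list. size l = k \<and> sum_list l = n - k}"
    unfolding im[symmetric] by (intro card_image inj_on_subset[OF inj_mapI[OF inj_Suc]]) simp
  also have "\<dots> = (n - k + k - 1) choose (n - k)" by (rule card_length_sum_list)
  also have "\<dots> = (n - 1) choose (k - 1)"
    using assms binomial_symmetric[of "k - 1" "n - 1"] by auto
  finally show ?thesis .
qed

lemma choose_L1: "(c choose Suc r) + d * (c choose r) \<le> ((c + d) choose Suc r)"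
proof (induction d)
  case (Suc d)
  have "c choose r \<le> (c + d) choose r" by (rule binomial_right_mono) simp
  thus ?case using Suc by simp
qed simp

lemma choose_L2: "((x + d) choose Suc r) \<le> (x choose Suc r) + d * ((x + d) choose r)"
proof (induction d)
  case (Suc d)
  have "(x + d) choose r \<le> (x + Suc d) choose r" by (rule binomial_right_mono) simp
  hence "d * ((x + d) choose r) \<le> d * ((x + Suc d) choose r)" by (rule mult_le_mono2)
  moreover have "((x + Suc d) choose Suc r) = ((x + d) choose r) + ((x + d) choose Suc r)" by simp
  ultimately show ?case using Suc \<open>(x + d) choose r \<le> (x + Suc d) choose r\<close> unfolding mult_Suc by linarith
qed simp

lemma choose_conv0:
  assumes "a \<le> b" "2 * c \<le> a + b"
  shows "2 * (c choose r) \<le> (a choose r) + (b choose r)"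
proof (cases "c \<le> a")
  case True
  then show ?thesis using binomial_right_mono[of c a r] binomial_right_mono[of c b r] assms by linarith
next
  case False
  define d where "d = c - a"
  have cd: "c = a + d" "c + d \<le> b" using False assms d_def by auto
  show ?thesis
  proof (cases r)
    case 0 then show ?thesis by simp
  next
    case (Suc r')
    have 1: "(c choose Suc r') \<le> (a choose Suc r') + d * (c choose r')"
      using choose_L2[of a d r'] cd by simp
    have 2: "(c choose Suc r') + d * (c choose r') \<le> (b choose Suc r')"
      using choose_L1[of c r' d] binomial_right_mono[OF cd(2), of "Suc r'"] by linarith
    show ?thesis unfolding Suc using 1 2 by linarith
  qed
qed

lemma choose_conv:
  assumes "2 * c \<le> a + b"
  shows "2 * (c choose r) \<le> (a choose r) + (b choose r)"
  using choose_conv0[of a b c r] choose_conv0[of b a c r] assms by (cases "a \<le> b") auto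

lemma choose_tele: "((a + m) choose Suc r) = (a choose Suc r) + (\<Sum>i<m. (a + i) choose r)"
  by (induction m) auto

lemma key_ineq:
  assumes "2 \<le> k" "k \<le> A"
  shows "((A - k) choose (k - 1)) + k * ((A - k div 2 - 1) choose (k - 2)) \<le> (A choose (k - 1))"
proof -
  define r where "r = k - 2"
  define c where "c = A - k div 2 - 1"
  have kr: "k - 1 = Suc r" "k - 2 = r" using assms r_def by auto
  have t: "(A choose (k - 1)) = ((A - k) choose (k - 1)) + (\<Sum>i<k. (A - k + i) choose r)"
    using choose_tele[of "A - k" k r] assms kr by simp
  have "(\<Sum>i<k. (A - k + (k - Suc i)) choose r) = (\<Sum>i<k. (A - k + i) choose r)"
    by (rule sum.nat_diff_reindex)
  hence "2 * (\<Sum>i<k. (A - k + i) choose r)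
       = (\<Sum>i<k. ((A - k + i) choose r) + ((A - k + (k - Suc i)) choose r))"
    by (simp add: sum.distrib del: One_nat_def)
  also have "\<dots> \<ge> (\<Sum>i<k. 2 * (c choose r))"
    by (rule sum_mono, rule choose_conv) (use assms c_def in auto)
  finally have "2 * (k * (c choose r)) \<le> 2 * (\<Sum>i<k. (A - k + i) choose r)" by simp
  thus ?thesis using t kr c_def by simp
qed


definition Qs :: "nat \<Rightarrow> nat \<Rightarrow> nat set set" where
  "Qs n k = {S. finite S \<and> card S = k \<and> 0 \<notin> S \<and> \<Sum>S = n}"

definition DCs :: "nat \<Rightarrow> nat \<Rightarrow> nat list set" where
  "DCs n k = {xs \<in> compositions n k. distinct xs}"

lemma finite_Qs: "finite (Qs n k)"
proof -
  have "Qs n k \<subseteq> Pow {0..n}"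
  proof
    fix S assume S: "S \<in> Qs n k"
    have "\<forall>x\<in>S. x \<le> n"
    proof
      fix x assume "x \<in> S"
      hence "id x \<le> sum id S" using S unfolding Qs_def by (intro member_le_sum) auto
      thus "x \<le> n" using S unfolding Qs_def by simp
    qed
    thus "S \<in> Pow {0..n}" by auto
  qed
  thus ?thesis by (rule finite_subset) simp
qed

lemma card_DCs: "card (DCs n k) \<le> fact k * card (Qs n k)"
proof -
  define P where "P S = {xs. length xs = k \<and> distinct xs \<and> set xs \<subseteq> S}" for S :: "nat set"
  have "DCs n k \<subseteq> (\<Union>S\<in>Qs n k. P S)"
  proof
    fix xs assume xs: "xs \<in> DCs n k"
    hence "set xs \<in> Qs n k" unfolding DCs_def compositions_def Qs_def
      by (auto simp: distinct_card distinct_sum_list_conv_Sum)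
    moreover have "xs \<in> P (set xs)" using xs unfolding DCs_def P_def compositions_def
      by auto
    ultimately show "xs \<in> (\<Union>S\<in>Qs n k. P S)" by blast
  qed
  moreover have "finite (P S)" if "S \<in> Qs n k" for S
    using that finite_lists_length_eq[of S k] unfolding P_def Qs_def
    by (auto elim!: rev_finite_subset)
  ultimately have "card (DCs n k) \<le> card (\<Union>S\<in>Qs n k. P S)"
    by (intro card_mono) (auto simp: finite_Qs)
  also have "\<dots> \<le> (\<Sum>S\<in>Qs n k. card (P S))"
    by (rule card_UN_le) (rule finite_Qs)
  also have "\<dots> = (\<Sum>S\<in>Qs n k. fact k)"
  proof (rule sum.cong)
    fix S assume "S \<in> Qs n k"
    hence "card (P S) = \<Prod>{card S - k + 1 .. card S}" "card S = k" "finite S"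
      unfolding P_def Qs_def using card_lists_distinct_length_eq[of S k] by auto
    thus "card (P S) = fact k" by (simp add: fact_prod)
  qed simp
  finally show ?thesis by (simp add: mult.commute)
qed

lemma sum_minus_one:
  assumes "finite S" "0 \<notin> S"
  shows "(\<Sum>x\<in>S. x - 1) + card S = \<Sum>S"
  using assms by (induction S rule: finite_induct) auto

lemma sp: "0 \<notin> S \<Longrightarrow> x \<in> S \<Longrightarrow> Suc (x - 1) = x"
  by (cases x) auto

lemma Suc_img:
  assumes a: "0 \<notin> S" shows "Suc ` ((\<lambda>x. x - 1) ` S) = S"
proof
  show "Suc ` ((\<lambda>x. x - 1) ` S) \<subseteq> S" using sp[OF a] by auto
  show "S \<subseteq> Suc ` ((\<lambda>x. x - 1) ` S)"
  proof
    fix x assume x: "x \<in> S"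
    hence "x - 1 \<in> (\<lambda>x. x - 1) ` S" by blast
    thus "x \<in> Suc ` ((\<lambda>x. x - 1) ` S)" using sp[OF a x] by (metis image_eqI)
  qed
qed

lemma inj1: "0 \<notin> S \<Longrightarrow> inj_on (\<lambda>x::nat. x - 1) S"
  by (rule inj_on_inverseI[where g = Suc]) (metis sp)

lemma zero_img: "0 \<notin> S \<Longrightarrow> 1 \<notin> S \<Longrightarrow> 0 \<notin> (\<lambda>x::nat. x - 1) ` S"
  by (auto simp: image_iff) (metis One_nat_def diff_is_0_eq le_SucE le_zero_eq)

lemma Qs_rec:
  assumes "1 \<le> k"
  shows "card (Qs n k) \<le> card (Qs (n - k) k) + card (Qs (n - k) (k - 1))"
proof -
  define A where "A = {S \<in> Qs n k. 1 \<notin> S}"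
  define B where "B = {S \<in> Qs n k. 1 \<in> S}"
  have QAB: "Qs n k = A \<union> B" unfolding A_def B_def by auto
  have cA: "card A \<le> card (Qs (n - k) k)"
  proof (rule card_inj_on_le[where f = "\<lambda>S. (\<lambda>x. x - 1) ` S"])
    show "inj_on (\<lambda>S. (\<lambda>x. x - 1) ` S) A"
    proof (rule inj_onI)
      fix S T assume S: "S \<in> A" and T: "T \<in> A" and e: "(\<lambda>x. x - 1) ` S = (\<lambda>x. x - 1) ` T"
      have "0 \<notin> S" "0 \<notin> T" using S T unfolding A_def Qs_def by auto
      thus "S = T" using e Suc_img[of S] Suc_img[of T] by metis
    qed
    show "(\<lambda>S. (\<lambda>x. x - 1) ` S) ` A \<subseteq> Qs (n - k) k"
    proof
      fix S' assume "S' \<in> (\<lambda>S. (\<lambda>x. x - 1) ` S) ` A"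
      then obtain S where S: "S \<in> A" "S' = (\<lambda>x. x - 1) ` S" by auto
      have fin: "finite S" "card S = k" "0 \<notin> S" "1 \<notin> S" "\<Sum>S = n"
        using S unfolding A_def Qs_def by auto
      have ij: "inj_on (\<lambda>x::nat. x - 1) S" by (rule inj1) (rule fin(3))
      have "card S' = k" using S(2) card_image[OF ij] fin by simp
      moreover have "\<Sum>S' = n - k" using S(2) sum.reindex[OF ij, of id] sum_minus_one[of S] fin
        by simp
      moreover have "0 \<notin> S'" unfolding S(2) using fin zero_img by blast
      ultimately show "S' \<in> Qs (n - k) k" using S(2) fin unfolding Qs_def by auto
    qed
  qed (rule finite_Qs)
  have cB: "card B \<le> card (Qs (n - k) (k - 1))"
  proof (rule card_inj_on_le[where f = "\<lambda>S. (\<lambda>x. x - 1) ` (S - {1})"])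
    show "inj_on (\<lambda>S. (\<lambda>x. x - 1) ` (S - {1})) B"
    proof (rule inj_onI)
      fix S T assume S: "S \<in> B" and T: "T \<in> B" and e: "(\<lambda>x. x - 1) ` (S - {1}) = (\<lambda>x. x - 1) ` (T - {1})"
      have "0 \<notin> S - {1}" "0 \<notin> T - {1}" using S T unfolding B_def Qs_def by auto
      hence "S - {1} = T - {1}" using e Suc_img[of "S - {1}"] Suc_img[of "T - {1}"] by metis
      thus "S = T" using S T unfolding B_def by blast
    qed
    show "(\<lambda>S. (\<lambda>x. x - 1) ` (S - {1})) ` B \<subseteq> Qs (n - k) (k - 1)"
    proof
      fix S' assume "S' \<in> (\<lambda>S. (\<lambda>x. x - 1) ` (S - {1})) ` B"
      then obtain S where S: "S \<in> B" "S' = (\<lambda>x. x - 1) ` (S - {1})" by auto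
      have fin: "finite S" "card S = k" "0 \<notin> S" "1 \<in> S" "\<Sum>S = n"
        using S unfolding B_def Qs_def by auto
      have fin2a: "finite (S - {1})" "0 \<notin> S - {1}" using fin by auto
      have fin2b: "card (S - {1}) = k - 1" using fin by (simp add: card_Diff_singleton)
      have "\<Sum>S = 1 + \<Sum>(S - {1})" using sum.remove[OF fin(1) fin(4), of id] by simp
      hence fin2c: "\<Sum>(S - {1}) = n - 1" using fin(5) by linarith
      note fin2 = fin2a(1) fin2b fin2a(2) fin2c
      have ij: "inj_on (\<lambda>x::nat. x - 1) (S - {1})" by (rule inj1) (rule fin2(3))
      have "card S' = k - 1" using S(2) card_image[OF ij] fin2 by simp
      moreover have "\<Sum>S' = n - k" using S(2) sum.reindex[OF ij, of id] sum_minus_one[of "S - {1}"] fin2 assms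
        by simp
      moreover have "0 \<notin> S'" unfolding S(2) using fin zero_img[of "S - {1}"] by blast
      ultimately show "S' \<in> Qs (n - k) (k - 1)" using S(2) fin2 unfolding Qs_def by auto
    qed
  qed (rule finite_Qs)
  have "card (Qs n k) \<le> card A + card B" unfolding QAB by (rule card_Un_le)
  thus ?thesis using cA cB by linarith
qed


fun sk :: "nat \<Rightarrow> nat" where
  "sk 0 = 0"
| "sk (Suc k) = sk k + k div 2"

lemma sk_le: "2 \<le> k \<Longrightarrow> 2 * (sk k + 1) \<le> k * (k - 1)"
proof (induction k rule: nat_induct_at_least)
  case base then show ?case by (simp add: numeral_2_eq_2)
next
  case (Suc k)
  have "2 * (k div 2) \<le> k" by simp
  moreover have "Suc k * (Suc k - 1) = k * (k - 1) + 2 * k" using Suc by (cases k) auto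
  ultimately show ?case using Suc by simp
qed

lemma sk_ge: "(k - 1)^2 \<le> 4 * sk k + k"
proof (induction k)
  case (Suc k)
  have "4 * (k div 2) + 2 \<ge> 2 * k" by linarith
  moreover have "k^2 = (k - 1)^2 + 2 * k - 1" if k1: "k \<ge> 1"
  proof -
    obtain j where "k = Suc j" using k1 by (cases k) auto
    thus ?thesis by (simp add: power2_eq_square)
  qed
  ultimately show ?case using Suc by (cases "k = 0") auto
qed simp

lemma Qs_sum_lower: "finite S \<Longrightarrow> 0 \<notin> S \<Longrightarrow> card S * (card S + 1) \<le> 2 * \<Sum>S"
proof (induction "card S" arbitrary: S)
  case 0 then show ?case by simp
next
  case (Suc m)
  hence ne: "S \<noteq> {}" by auto
  define M where "M = Max S"
  have MS: "M \<in> S" using Suc ne M_def by simp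
  have "S \<subseteq> {1..M}"
  proof
    fix x assume x: "x \<in> S"
    have "x \<noteq> 0" using Suc.prems(2) x by metis
    moreover have "x \<le> M" unfolding M_def using x Suc.prems by simp
    ultimately show "x \<in> {1..M}" by simp
  qed
  hence cM: "card S \<le> M" using card_mono[of "{1..M}" S] by simp
  have cSM: "m = card (S - {M})" using Suc.hyps(2) MS Suc.prems by simp
  have IH: "m * (m + 1) \<le> 2 * \<Sum>(S - {M})"
    using Suc.hyps(1)[OF cSM] Suc.prems cSM by simp
  have "\<Sum>S = M + \<Sum>(S - {M})" using sum.remove[OF Suc.prems(1) MS, of id] by simp
  thus ?case using IH cM Suc.hyps(2)[symmetric] by (simp add: algebra_simps)
qed

lemma Qs_one: "card (Qs n 1) \<le> 1"
proof -
  have "Qs n 1 \<subseteq> {{n}}" unfolding Qs_def by (auto simp: card_Suc_eq)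
  thus ?thesis using card_mono[of "{{n}}"] by fastforce
qed

lemma arith_aux: "a + b + 1 = (k::nat) \<Longrightarrow> k \<le> n - 1 - (s + a) \<Longrightarrow> n - k - 1 - s = n - 1 - (s + a) - b - 1"
  by linarith

lemma arith_aux2: "2 * (s + 1) + 2 * k \<le> 2 * n \<Longrightarrow> (k::nat) \<le> n - 1 - s"
  by presburger

lemma bound_Qs: "1 \<le> k \<Longrightarrow> fact k * card (Qs n k) \<le> (n - 1 - sk k) choose (k - 1)"
proof (induction n arbitrary: k rule: less_induct)
  case (less n)
  show ?case
  proof (cases "k = 1")
    case True
    then show ?thesis using Qs_one[of n] by simp
  next
    case False
    hence k2: "2 \<le> k" using less.prems by simp
    show ?thesis
    proof (cases "Qs n k = {}")
      case True then show ?thesis by simp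
    next
      case False
      then obtain S where "S \<in> Qs n k" by auto
      hence h1: "k * (k + 1) \<le> 2 * n" using Qs_sum_lower[of S] unfolding Qs_def by auto
      have h2: "2 * (sk k + 1) \<le> k * (k - 1)" using sk_le k2 by simp
      have h3: "k * (k + 1) = k * (k - 1) + 2 * k" using k2 by (cases k) (simp_all add: algebra_simps)
      have "2 * (sk k + 1) + 2 * k \<le> k * (k + 1)" unfolding h3 using h2 by (rule add_le_mono1)
      hence "2 * (sk k + 1) + 2 * k \<le> 2 * n" using h1 by (rule order_trans)
      hence Ak: "k \<le> n - 1 - sk k" by (rule arith_aux2)
      define A where "A = n - 1 - sk k"
      have nk: "k \<le> n" "n - k < n" using Ak k2 by auto
      have sks: "sk k = sk (k - 1) + (k - 1) div 2" using k2 by (cases k) auto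
      have e1: "n - k - 1 - sk k = A - k" unfolding A_def by simp
      have e2: "n - k - 1 - sk (k - 1) = A - k div 2 - 1"
      proof -
        have d: "(k - 1) div 2 + k div 2 + 1 = k" using k2 by presburger
        show ?thesis using arith_aux[OF d, of n "sk (k - 1)"] Ak unfolding A_def sks by blast
      qed
      have fk: "fact k = k * fact (k - 1)" using k2 by (cases k) auto
      have "fact k * card (Qs n k) \<le> fact k * (card (Qs (n - k) k) + card (Qs (n - k) (k - 1)))"
        using Qs_rec[of k n] less.prems by (intro mult_le_mono2) auto
      also have "\<dots> = fact k * card (Qs (n - k) k) + k * (fact (k - 1) * card (Qs (n - k) (k - 1)))"
        unfolding fk by (simp add: algebra_simps)
      also have "\<dots> \<le> ((A - k) choose (k - 1)) + k * ((A - k div 2 - 1) choose (k - 2))"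
      proof -
        have "fact k * card (Qs (n - k) k) \<le> (n - k - 1 - sk k) choose (k - 1)"
          using less.IH[OF nk(2), of k] less.prems by simp
        moreover have "fact (k - 1) * card (Qs (n - k) (k - 1)) \<le> (n - k - 1 - sk (k - 1)) choose (k - 1 - 1)"
          using less.IH[OF nk(2), of "k - 1"] k2 by simp
        moreover have "k - 1 - 1 = k - 2" by simp
        ultimately show ?thesis unfolding e1 e2 by (intro add_mono mult_le_mono2) auto
      qed
      also have "\<dots> \<le> A choose (k - 1)" using key_ineq[OF k2, of A] Ak unfolding A_def by blast
      finally show ?thesis unfolding A_def .
    qed
  qed
qed


lemma sum_list_upd: "i < length xs \<Longrightarrow> sum_list (xs[i := v]) + xs ! i = sum_list xs + (v::nat)"
proof (induction xs arbitrary: i)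
  case (Cons a xs) then show ?case by (cases i) auto
qed simp

definition mrg :: "nat \<Rightarrow> nat \<Rightarrow> nat list \<Rightarrow> nat list" where
  "mrg i j xs = (let ys = xs[i := xs ! i + xs ! j] in take j ys @ drop (Suc j) ys)"

lemma mrg_len: "j < length xs \<Longrightarrow> length (mrg i j xs) = length xs - 1"
  unfolding mrg_def Let_def by simp

lemma mrg_nth: "j < length xs \<Longrightarrow> t < length xs - 1 \<Longrightarrow>
  mrg i j xs ! t = (if t < j then (xs[i := xs ! i + xs ! j]) ! t else (xs[i := xs ! i + xs ! j]) ! Suc t)"
  unfolding mrg_def Let_def by (auto simp: nth_append min_def)

lemma mrg_sum: "i < j \<Longrightarrow> j < length xs \<Longrightarrow> sum_list (mrg i j xs) = sum_list xs"
proof -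
  assume a: "i < j" "j < length xs"
  define ys where "ys = xs[i := xs ! i + xs ! j]"
  have "ys = take j ys @ ys ! j # drop (Suc j) ys" by (rule id_take_nth_drop) (simp add: ys_def a)
  hence "sum_list ys = sum_list (take j ys @ drop (Suc j) ys) + ys ! j"
    by (metis add.commute add.left_commute sum_list.Cons sum_list_append)
  moreover have "ys ! j = xs ! j" using a ys_def by simp
  moreover have "sum_list ys + xs ! i = sum_list xs + (xs ! i + xs ! j)"
    unfolding ys_def using a by (intro sum_list_upd) simp
  ultimately show ?thesis unfolding mrg_def Let_def ys_def[symmetric] by linarith
qed

lemma mrg_set: "x \<in> set (mrg i j xs) \<Longrightarrow> x \<in> set xs \<or> x = xs ! i + xs ! j"
  unfolding mrg_def Let_def
  by (auto dest!: in_set_takeD in_set_dropD set_update_subset_insert[THEN subsetD])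

lemma mrg_inj:
  assumes "i < j" "j < k"
  shows "inj_on (mrg i j) {xs \<in> compositions n k. xs ! i = xs ! j}"
proof (rule inj_onI)
  fix xs zs assume xs: "xs \<in> {xs \<in> compositions n k. xs ! i = xs ! j}"
    and zs: "zs \<in> {xs \<in> compositions n k. xs ! i = xs ! j}" and e: "mrg i j xs = mrg i j zs"
  have lx: "length xs = k" "xs ! i = xs ! j" using xs unfolding compositions_def by auto
  have lz: "length zs = k" "zs ! i = zs ! j" using zs unfolding compositions_def by auto
  show "xs = zs"
  proof (rule nth_equalityI)
    show "length xs = length zs" using lx lz by simp
    fix t assume "t < length xs"
    hence t: "t < k" using lx by simp
    have ii: "xs ! i = zs ! i"
    proof -
      have "mrg i j xs ! i = mrg i j zs ! i" using e by simp
      thus ?thesis using mrg_nth[of j xs i i] mrg_nth[of j zs i i] lx lz assms by auto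
    qed
    show "xs ! t = zs ! t"
    proof (cases "t < j")
      case True
      show ?thesis
      proof (cases "t = i")
        case True then show ?thesis using ii by simp
      next
        case False
        have "mrg i j xs ! t = mrg i j zs ! t" using e by simp
        thus ?thesis using mrg_nth[of j xs t i] mrg_nth[of j zs t i] lx lz assms \<open>t < j\<close> False by auto
      qed
    next
      case False
      show ?thesis
      proof (cases "t = j")
        case True then show ?thesis using ii lx lz by simp
      next
        case False
        hence tj: "j < t" using \<open>\<not> t < j\<close> by simp
        have "mrg i j xs ! (t - 1) = mrg i j zs ! (t - 1)" using e by simp
        moreover have f: "\<not> t - 1 < j" "Suc (t - 1) = t" "t \<noteq> i" "t - 1 < k - 1" using tj assms t by auto
        moreover have "mrg i j xs ! (t - 1) = xs ! t" using mrg_nth[of j xs "t - 1" i] lx assms f by simp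
        moreover have "mrg i j zs ! (t - 1) = zs ! t" using mrg_nth[of j zs "t - 1" i] lz assms f by simp
        ultimately show ?thesis by simp
      qed
    qed
  qed
qed

lemma card_pair:
  assumes "i < j" "j < k" "k \<le> n"
  shows "card {xs \<in> compositions n k. xs ! i = xs ! j} \<le> (n - 1) choose (k - 2)"
proof -
  have "mrg i j ` {xs \<in> compositions n k. xs ! i = xs ! j} \<subseteq> compositions n (k - 1)"
  proof
    fix ys assume "ys \<in> mrg i j ` {xs \<in> compositions n k. xs ! i = xs ! j}"
    then obtain xs where xs: "xs \<in> compositions n k" "ys = mrg i j xs" by auto
    have l: "length xs = k" "\<forall>x\<in>set xs. 0 < x" "sum_list xs = n" using xs unfolding compositions_def by auto
    have "length ys = k - 1" using mrg_len[of j xs i] xs l assms by simp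
    moreover have "sum_list ys = n" using mrg_sum[of i j xs] xs l assms by simp
    moreover have "\<forall>x\<in>set ys. 0 < x"
    proof
      fix x assume "x \<in> set ys"
      hence "x \<in> set xs \<or> x = xs ! i + xs ! j" using mrg_set xs by simp
      moreover have "xs ! j \<in> set xs" using l assms by simp
      ultimately show "0 < x" using l by auto
    qed
    ultimately show "ys \<in> compositions n (k - 1)" unfolding compositions_def by simp
  qed
  hence "card {xs \<in> compositions n k. xs ! i = xs ! j} \<le> card (compositions n (k - 1))"
    using card_inj_on_le[OF mrg_inj[OF assms(1,2)]] finite_comp by blast
  also have "\<dots> = (n - 1) choose (k - 2)" using card_comp[of "k - 1" n] assms by (simp add: numeral_2_eq_2)
  finally show ?thesis .
qed


definition NEs :: "nat \<Rightarrow> nat \<Rightarrow> nat list set" where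
  "NEs n k = {xs \<in> compositions n k. \<exists>i j. i < j \<and> j < k \<and> xs ! i = xs ! j}"

lemma card_NE:
  assumes "2 \<le> k" "k \<le> n"
  shows "card (NEs n k) \<le> k * k * ((n - 1) choose (k - 2))"
proof -
  define I where "I = {(i, j). i < j \<and> j < (k::nat)}"
  have IS: "I \<subseteq> {..<k} \<times> {..<k}" unfolding I_def by auto
  have fI: "finite I" using IS finite_subset by blast
  have cI: "card I \<le> k * k" using card_mono[OF _ IS] by simp
  have "NEs n k \<subseteq> (\<Union>p\<in>I. {xs \<in> compositions n k. xs ! fst p = xs ! snd p})"
    unfolding NEs_def I_def by force
  hence "card (NEs n k) \<le> card (\<Union>p\<in>I. {xs \<in> compositions n k. xs ! fst p = xs ! snd p})"
    by (intro card_mono) (auto simp: fI finite_comp)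
  also have "\<dots> \<le> (\<Sum>p\<in>I. card {xs \<in> compositions n k. xs ! fst p = xs ! snd p})"
    by (rule card_UN_le[OF fI])
  also have "\<dots> \<le> (\<Sum>p\<in>I. (n - 1) choose (k - 2))"
  proof (rule sum_mono)
    fix p assume "p \<in> I"
    then obtain a b where "p = (a, b)" "a < b" "b < k" unfolding I_def by auto
    hence "card {xs \<in> compositions n k. xs ! a = xs ! b} \<le> (n - 1) choose (k - 2)"
      using assms(2) by (intro card_pair)
    thus "card {xs \<in> compositions n k. xs ! fst p = xs ! snd p} \<le> (n - 1) choose (k - 2)"
      using \<open>p = (a, b)\<close> by simp
  qed
  also have "\<dots> = card I * ((n - 1) choose (k - 2))" by simp
  also have "\<dots> \<le> k * k * ((n - 1) choose (k - 2))" using cI by (rule mult_le_mono1)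
  finally show ?thesis .
qed

lemma nd_iff: "length xs = k \<Longrightarrow> (\<not> distinct xs) = (\<exists>i j. i < j \<and> j < k \<and> xs ! i = xs ! j)"
proof
  assume l: "length xs = k" and "\<not> distinct xs"
  then obtain i j where ij: "i < k" "j < k" "i \<noteq> j" "xs ! i = xs ! j" unfolding distinct_conv_nth by auto
  show "\<exists>i j. i < j \<and> j < k \<and> xs ! i = xs ! j"
  proof (cases "i < j")
    case True then show ?thesis using ij by blast
  next
    case False
    hence "j < i" using ij by simp
    then show ?thesis using ij(1,4) by (intro exI[of _ j] exI[of _ i]) simp
  qed
next
  assume "length xs = k" "\<exists>i j. i < j \<and> j < k \<and> xs ! i = xs ! j"
  then obtain i j where "i < j" "j < k" "xs ! i = xs ! j" by blast
  show "\<not> distinct xs"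
  proof
    assume d: "distinct xs"
    have "i = j" using nth_eq_iff_index_eq[OF d, of i j] \<open>i < j\<close> \<open>j < k\<close> \<open>length xs = k\<close> \<open>xs ! i = xs ! j\<close> by simp
    thus False using \<open>i < j\<close> by simp
  qed
qed

lemma NE_DC:
  shows "card (NEs n k) + card (DCs n k) = card (compositions n k)"
proof -
  have NE: "NEs n k = {xs \<in> compositions n k. \<not> distinct xs}"
    unfolding NEs_def using nd_iff unfolding compositions_def by blast
  have "compositions n k = NEs n k \<union> DCs n k" unfolding NE DCs_def by blast
  moreover have "NEs n k \<inter> DCs n k = {}" unfolding NE DCs_def by blast
  moreover have "finite (NEs n k)" "finite (DCs n k)" unfolding NEs_def DCs_def using finite_comp by auto
  ultimately show ?thesis by (metis card_Un_disjoint)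
qed

lemma comp_pos: "2 \<le> k \<Longrightarrow> k \<le> n \<Longrightarrow> 0 < card (compositions n k)"
  using card_comp[of k n] by (simp add: zero_less_binomial_iff del: binomial_Suc_Suc)

lemma prob_NE: "prob_equal_parts n k = real (card (NEs n k)) / real (card (compositions n k))"
  unfolding prob_equal_parts_def NEs_def by (rule refl)

lemma binom_ratio:
  assumes "2 \<le> k" "k \<le> n"
  shows "(k - 1) * ((n - 1) choose (k - 1)) = (n - k + 1) * ((n - 1) choose (k - 2))"
proof -
  have eqs: "Suc (k - 2 + (n - k)) = n - 1" "Suc (k - 2) = k - 1" "Suc (n - k) = n - k + 1" using assms by auto
  show ?thesis using Suc_times_binomial_add[of "k - 2" "n - k"] unfolding eqs .
qed

lemma part1_bound:
  assumes "2 \<le> k" "k \<le> n" "real n / real k ^ 3 \<ge> 2"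
  shows "prob_equal_parts n k \<le> 2 * inverse (real n / real k ^ 3)"
proof -
  define C where "C = (n - 1) choose (k - 1)"
  define C' where "C' = (n - 1) choose (k - 2)"
  have Cp: "0 < C" unfolding C_def using assms by (simp add: zero_less_binomial_iff del: binomial_Suc_Suc)
  have kp: "real k > 0" using assms by simp
  have k3: "real k ^ 3 > 0" using kp by simp
  have n2: "real n \<ge> 2 * real k ^ 3" using assms(3) k3 by (simp add: field_simps)
  have "real k ^ 1 \<le> real k ^ 3" by (rule power_increasing) (use assms(1) in auto)
  hence "real k ^ 3 \<ge> real k" by simp
  hence nk: "real n \<ge> 2 * real k" using n2 by linarith
  have "real (n - k + 1) = real n - real k + 1" using assms by (simp add: of_nat_diff)
  hence nk1: "real (n - k + 1) \<ge> real n / 2" using nk by linarith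
  have rat: "real (k - 1) * real C = real (n - k + 1) * real C'"
    using arg_cong[of _ _ real, OF binom_ratio[OF assms(1,2)]] unfolding C_def C'_def of_nat_mult .
  have cc: "card (compositions n k) = C" using card_comp[of k n] assms unfolding C_def by simp
  have "real (card (NEs n k)) \<le> real (k * k * C')" using card_NE[OF assms(1,2)] unfolding C'_def by linarith
  hence "prob_equal_parts n k \<le> real (k * k * C') / real C"
    unfolding prob_NE cc by (rule divide_right_mono) simp
  also have "\<dots> = real k * real k * (real (k - 1) / real (n - k + 1))"
  proof -
    have np: "real (n - k + 1) > 0" by simp
    have "real C' = real (k - 1) * real C / real (n - k + 1)" using rat np by (simp add: field_simps)
    thus ?thesis using Cp by simp
  qed
  also have "\<dots> \<le> real k * real k * (real k / (real n / 2))"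
  proof (rule mult_left_mono)
    show "real (k - 1) / real (n - k + 1) \<le> real k / (real n / 2)"
      by (rule frac_le) (use nk nk1 kp in auto)
  qed simp
  also have "\<dots> = 2 * inverse (real n / real k ^ 3)" by (simp add: field_simps power3_eq_cube)
  finally show ?thesis .
qed

lemma binom_shrink:
  assumes "r \<le> m"
  shows "real ((m - s) choose r) \<le> real (m choose r) * (1 - real r / real m) ^ s"
proof (induction s)
  case 0 then show ?case by simp
next
  case (Suc s)
  define x where "x = 1 - real r / real m"
  have x0: "0 \<le> x" unfolding x_def
  proof (cases "m = 0")
    case False
    hence "real r / real m \<le> 1" using assms by simp
    thus "0 \<le> 1 - real r / real m" by simp
  qed simp
  have step: "real ((m - Suc s) choose r) \<le> real ((m - s) choose r) * x"
  proof (cases "m - s = 0")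
    case True
    hence "m - Suc s = 0" by simp
    then show ?thesis using True assms unfolding x_def by (cases r) auto
  next
    case False
    define t where "t = m - s"
    have t1: "t \<ge> 1" "t \<le> m" using False t_def by auto
    have ms: "m - Suc s = t - 1" using t_def by simp
    have ab: "(t - r) * (t choose r) = t * ((t - 1) choose r)" by (rule binomial_absorb_comp)
    show ?thesis
    proof (cases "r \<le> t")
      case True
      have ab': "real (t - r) * real (t choose r) = real t * real ((t - 1) choose r)"
        using arg_cong[of _ _ real, OF ab] unfolding of_nat_mult .
      hence ab'': "(real t - real r) * real (t choose r) = real t * real ((t - 1) choose r)"
        using True by (simp add: of_nat_diff)
      have tp: "real t > 0" using t1 by simp
      have "real ((t - 1) choose r) = (real t - real r) * real (t choose r) / real t"
        using ab'' tp by (simp add: field_simps)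
      also have "\<dots> = real (t choose r) * (1 - real r / real t)"
        using tp by (simp add: field_simps)
      also have "\<dots> \<le> real (t choose r) * x"
      proof (rule mult_left_mono)
        have "real r / real m \<le> real r / real t"
          by (rule divide_left_mono) (use t1 tp in auto)
        thus "1 - real r / real t \<le> x" unfolding x_def by simp
      qed simp
      finally show ?thesis unfolding ms t_def .
    next
      case False
      hence z: "(m - Suc s) choose r = 0" "(m - s) choose r = 0" using ms t_def by (auto simp: binomial_eq_0)
      show ?thesis by (simp only: z)
    qed
  qed
  have "real ((m - s) choose r) * x \<le> real (m choose r) * x ^ s * x"
    using Suc.IH x0 unfolding x_def by (rule mult_right_mono)
  also have "\<dots> = real (m choose r) * x ^ Suc s" by (simp add: power_Suc2 mult.assoc)
  finally show ?case using step unfolding x_def by simp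
qed


lemma k3_bound:
  assumes "6 \<le> k"
  shows "real k ^ 3 \<le> 16 * real (k - 1) * real (sk k)"
proof -
  define x where "x = real k"
  have x6: "x \<ge> 6" using assms unfolding x_def by simp
  have km: "real (k - 1) = x - 1" using assms unfolding x_def by (simp add: of_nat_diff)
  have "real ((k - 1)^2) \<le> real (4 * sk k + k)" using sk_ge[of k] by (simp only: of_nat_le_iff)
  hence h: "(x - 1)^2 \<le> 4 * real (sk k) + x" unfolding x_def using km x_def by simp
  have "4 * (x - 1) * ((x - 1)^2 - x) \<le> 4 * (x - 1) * (4 * real (sk k))"
    by (rule mult_left_mono) (use h x6 in auto)
  moreover have "4 * (x - 1) * ((x - 1)^2 - x) = x^3 + x^2 * (3 * x - 16) + (16 * x - 4)"
    by (simp add: algebra_simps power2_eq_square power3_eq_cube)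
  moreover have "x^2 * (3 * x - 16) \<ge> 0" using x6 by simp
  ultimately have "x^3 \<le> 4 * (x - 1) * (4 * real (sk k))" using x6 by linarith
  moreover have "4 * (x - 1) * (4 * real (sk k)) = 16 * real (k - 1) * real (sk k)"
    unfolding km by simp
  ultimately show ?thesis unfolding x_def by linarith
qed

lemma exp_bound: "0 \<le> a \<Longrightarrow> a \<le> 1 \<Longrightarrow> 0 < real s * a \<Longrightarrow> (1 - a) ^ s \<le> 1 / (real s * a)"
proof -
  assume a: "0 \<le> a" "a \<le> 1" "0 < real s * a"
  have "(1 - a) ^ s \<le> exp (- a) ^ s"
    by (rule power_mono) (use a exp_ge_add_one_self[of "-a"] in auto)
  also have "\<dots> = exp (real s * (- a))" by (rule exp_of_nat_mult[symmetric])
  also have "\<dots> = 1 / exp (real s * a)" by (simp add: exp_minus')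
  also have "\<dots> \<le> 1 / (real s * a)"
  proof (rule divide_left_mono)
    show "real s * a \<le> exp (real s * a)" using exp_ge_add_one_self[of "real s * a"] by linarith
  qed (use a in auto)
  finally show ?thesis .
qed

lemma part2_bound:
  assumes "2 \<le> k" "k \<le> n" "real n / real k ^ 3 < 1 / 36"
  shows "1 - prob_equal_parts n k \<le> 16 * (real n / real k ^ 3)"
proof -
  have kp: "real k > 0" using assms by simp
  have k6: "6 \<le> k"
  proof (rule ccontr)
    assume "\<not> 6 \<le> k"
    hence "real k ^ 2 \<le> 36" using power_mono[of "real k" 6 2] by simp
    hence "1 / 36 \<le> 1 / real k ^ 2" using kp by (simp add: field_simps)
    also have "\<dots> = real k / real k ^ 3" using kp by (simp add: power2_eq_square power3_eq_cube)
    also have "\<dots> \<le> real n / real k ^ 3" by (rule divide_right_mono) (use assms(2) kp in auto)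
    finally show False using assms(3) by simp
  qed
  define C where "C = (n - 1) choose (k - 1)"
  define m where "m = n - 1"
  define r where "r = k - 1"
  define s where "s = sk k"
  have cc: "card (compositions n k) = C" using card_comp[of k n] assms unfolding C_def by (simp del: binomial_Suc_Suc)
  have Cp: "0 < C" unfolding C_def using assms by (simp add: zero_less_binomial_iff del: binomial_Suc_Suc)
  have "real (card (NEs n k)) = real C - real (card (DCs n k))"
    using NE_DC[of n k] cc by (metis add_diff_cancel_right' of_nat_add add_diff_cancel_left')
  hence "1 - prob_equal_parts n k = real (card (DCs n k)) / real C"
    unfolding prob_NE cc using Cp by (simp add: field_simps)
  also have "\<dots> \<le> real ((m - s) choose r) / real C"
  proof (rule divide_right_mono)
    have "card (DCs n k) \<le> (n - 1 - sk k) choose (k - 1)"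
      using card_DCs[of n k] bound_Qs[of k n] assms by linarith
    thus "real (card (DCs n k)) \<le> real ((m - s) choose r)" unfolding m_def s_def r_def by simp
  qed simp
  also have "\<dots> \<le> (1 - real r / real m) ^ s"
  proof -
    have rm: "r \<le> m" using assms unfolding r_def m_def by simp
    have "real ((m - s) choose r) \<le> real C * (1 - real r / real m) ^ s"
      unfolding C_def m_def[symmetric] r_def[symmetric] by (rule binom_shrink[OF rm])
    hence "real ((m - s) choose r) \<le> (1 - real r / real m) ^ s * real C" by (simp only: mult.commute)
    moreover have "real C > 0" using Cp by simp
    ultimately show ?thesis by (simp only: pos_divide_le_eq)
  qed
  also have "\<dots> \<le> 1 / (real s * (real r / real m))"
  proof (rule exp_bound)
    have mp: "real m > 0" "real r > 0" "real r \<le> real m" using assms k6 unfolding m_def r_def by auto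
    have kb: "real k ^ 3 \<le> 16 * real r * real s" using k3_bound[OF k6] unfolding r_def s_def by simp
    have "real s \<noteq> 0"
    proof
      assume "real s = 0"
      with kb have "real k ^ 3 \<le> 0" by simp
      with kp show False by simp
    qed
    hence "real s > 0" by simp
    thus "0 \<le> real r / real m" "real r / real m \<le> 1" "0 < real s * (real r / real m)" using mp by auto
  qed
  also have "\<dots> \<le> 16 * (real n / real k ^ 3)"
  proof -
    have mp: "real m > 0" "real r > 0" "real m \<le> real n" using assms k6 unfolding m_def r_def by auto
    have kb: "real k ^ 3 \<le> 16 * real r * real s" using k3_bound[OF k6] unfolding r_def s_def by simp
    have "real s \<noteq> 0"
    proof
      assume "real s = 0"
      with kb have "real k ^ 3 \<le> 0" by simp
      with kp show False by simp
    qed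
    hence sp: "real s > 0" by simp
    have "1 / (real s * (real r / real m)) = real m / (real r * real s)" using mp sp by simp
    also have "\<dots> \<le> real n / (real k ^ 3 / 16)"
      by (rule frac_le) (use mp sp kb kp in auto)
    also have "\<dots> = 16 * (real n / real k ^ 3)" by simp
    finally show ?thesis .
  qed
  finally show ?thesis .
qed


theorem mainTheorem3:
  fixes n k :: "nat \<Rightarrow> nat"
  assumes "\<And>m. k m \<ge> 2" and "\<And>m. n m \<ge> k m"
  shows "(filterlim (\<lambda>m. real (n m) / real (k m) ^ 3) at_top sequentially
            \<longrightarrow> (\<lambda>m. prob_equal_parts (n m) (k m)) \<longlonglongrightarrow> 0)
       \<and> ((\<lambda>m. real (n m) / real (k m) ^ 3) \<longlonglongrightarrow> 0
            \<longrightarrow> (\<lambda>m. prob_equal_parts (n m) (k m)) \<longlonglongrightarrow> 1)"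
proof (intro conjI impI)
  have P0: "\<And>m. 0 \<le> prob_equal_parts (n m) (k m)" unfolding prob_equal_parts_def by simp
  assume lim: "filterlim (\<lambda>m. real (n m) / real (k m) ^ 3) at_top sequentially"
  have ev: "eventually (\<lambda>m. 2 \<le> real (n m) / real (k m) ^ 3) sequentially"
    using lim unfolding filterlim_at_top by blast
  have bnd: "eventually (\<lambda>m. prob_equal_parts (n m) (k m) \<le> 2 * inverse (real (n m) / real (k m) ^ 3)) sequentially"
    using ev by eventually_elim (rule part1_bound[OF assms(1,2)])
  have g0: "(\<lambda>m. 2 * inverse (real (n m) / real (k m) ^ 3)) \<longlonglongrightarrow> 2 * 0"
    by (rule tendsto_mult[OF tendsto_const tendsto_inverse_0_at_top[OF lim]])
  show "(\<lambda>m. prob_equal_parts (n m) (k m)) \<longlonglongrightarrow> 0"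
    by (rule tendsto_sandwich[OF _ bnd tendsto_const]) (use P0 g0 in auto)
next
  assume lim: "(\<lambda>m. real (n m) / real (k m) ^ 3) \<longlonglongrightarrow> 0"
  have ev: "eventually (\<lambda>m. real (n m) / real (k m) ^ 3 < 1 / 36) sequentially"
    by (rule order_tendstoD(2)[OF lim]) simp
  have bnd: "eventually (\<lambda>m. 1 - prob_equal_parts (n m) (k m) \<le> 16 * (real (n m) / real (k m) ^ 3)) sequentially"
    using ev by eventually_elim (rule part2_bound[OF assms(1,2)])
  have Q0: "\<And>m. 0 \<le> 1 - prob_equal_parts (n m) (k m)"
  proof -
    fix m
    have "card (NEs (n m) (k m)) \<le> card (compositions (n m) (k m))" using NE_DC[of "n m" "k m"] by linarith
    hence "prob_equal_parts (n m) (k m) \<le> 1"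
      unfolding prob_NE by (cases "card (compositions (n m) (k m)) = 0") (auto simp: divide_le_eq_1)
    thus "0 \<le> 1 - prob_equal_parts (n m) (k m)" by simp
  qed
  have g0: "(\<lambda>m. 16 * (real (n m) / real (k m) ^ 3)) \<longlonglongrightarrow> 16 * 0"
    by (rule tendsto_mult[OF tendsto_const lim])
  have "(\<lambda>m. 1 - prob_equal_parts (n m) (k m)) \<longlonglongrightarrow> 0"
    by (rule tendsto_sandwich[OF _ bnd tendsto_const]) (use Q0 g0 in auto)
  hence "(\<lambda>m. 1 - (1 - prob_equal_parts (n m) (k m))) \<longlonglongrightarrow> 1 - 0"
    by (intro tendsto_diff tendsto_const)
  thus "(\<lambda>m. prob_equal_parts (n m) (k m)) \<longlonglongrightarrow> 1" by simp
qed

end
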